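(* Let $K\ge 2$ and let $(\mathbf{H},D,\mathbf{Z})$ follow the conditionally symmetric multidimensional Gaussian mixture model (csmGmm) described in the context. Define the local false discovery rate $$lfdr(\mathbf{z})=\Pr(\mathbf{H}\in\mathcal{H}_0\mid \mathbf{Z}=\mathbf{z})=\frac{\sum_{l:\mathbf{h}^l\in\mathcal{H}_0}\sum_{m=1}^{M_{b_l}}\pi_{b_l m}\prod_{k=1}^K\phi(z_k-h^l_k\mu_{b_l,m,k})}{\sum_{l=0}^{3^K-1}\sum_{m=1}^{M_{b_l}}\pi_{b_l m}\prod_{k=1}^K\phi(z_k-h^l_k\mu_{b_l,m,k})},\qquad \mathbf{z}\in\mathbb{R}^K,$$ where $\phi$ is the standard normal density and $\mathcal{H}_0=\{\mathbf{h}\in\{-1,0,1\}^K:\sum_{k=1}^K|h_k|<K\}$. Then for every $k\in\{1,\dots,K\}$, with all coordinates $z_{k'}$, $k'\neq k$, held fixed, $lfdr(\mathbf{z})$ is non-increasing in $z_k$ on $z_k>0$ and non-decreasing in $z_k$ on $z_k<0$. Consequently the csmGmm never produces incongruous results: whenever $\mathbf{z},\mathbf{z}'\in\mathbb{R}^K$ satisfy $\mathrm{sign}(z_k)=\mathrm{sign}(z'_k)$ and $|z_k|\ge|z'_k|$ for all $k$, we have $lfdr(\mathbf{z})\le lfdr(\mathbf{z}')$.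
   Context: Setting: large-scale testing of the composite null $\bigcup_{k=1}^K\{\theta_k=0\}$ for a vector of $K$ parameters using a vector of test statistics $\mathbf{Z}=(Z_1,\dots,Z_K)^T$. The latent association configuration is $\mathbf{H}\in\{-1,0,1\}^K$ ($H_k=0$: $\theta_k=0$; $H_k=\pm1$: $\theta_k$ positive/negative). Enumerate all $3^K$ configurations as $\mathbf{h}^0,\dots,\mathbf{h}^{3^K-1}$ with $\mathbf{h}^0=(0,\dots,0)^T$. The binary representation of $\mathbf{h}^l$ is $b_l=\sum_{k=1}^K 2^{K-k}|h^l_k|\in\{0,\dots,2^K-1\}$; its $k$-th binary digit is $|h^l_k|$. csmGmm: for each $b\in\{0,\dots,2^K-1\}$ there is a positive integer $M_b$ (with $M_0=1$), mean-magnitude vectors $\boldsymbol{\mu}_{b,m}=(\mu_{b,m,1},\dots,\mu_{b,m,K})^T$, $m=1,\dots,M_b$, and probabilities $\pi_{bm}\ge0$. Here $\mu_{b,m,k}=0$ if the $k$-th binary digit of $b$ is $0$ and $\mu_{b,m,k}>0$ otherwise, and $\mu_{2^K-1,m,k}\ge\mu_{b,m',k}$ for all $b<2^K-1$ and all $m,m',k$. The joint law of $(\mathbf{H},D)$ is $\Pr(\mathbf{H}=\mathbf{h}^l,D=m)=\pi_{b_l m}$ for $m=1,\dots,M_{b_l}$ (so configurations with the same binary representation share mixing probabilities), with $\sum_{l=0}^{3^K-1}\sum_{m=1}^{M_{b_l}}\pi_{b_l m}=1$. Conditional on $\mathbf{H}=\mathbf{h}^l$, $D=m$, $\mathbf{Z}\sim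 N_K(\mathrm{diag}(\mathbf{h}^l)\boldsymbol{\mu}_{b_l,m},\mathbf{I}_K)$. *)

theory Defs
  imports "HOL-Probability.Probability"
begin

(* Association configurations h in {-1,0,1}^K, coordinates indexed 1..K,
   represented as functions nat => int that vanish outside {1..K}. *)
definition configs :: "nat \<Rightarrow> (nat \<Rightarrow> int) set" where
  "configs K = {h. (\<forall>k\<in>{1..K}. h k \<in> {-1, 0, 1}) \<and> (\<forall>k. k \<notin> {1..K} \<longrightarrow> h k = 0)}"

definition binrep :: "nat \<Rightarrow> (nat \<Rightarrow> int) \<Rightarrow> nat" where
  "binrep K h = (\<Sum>k=1..K. 2 ^ (K - k) * nat \<bar>h k\<bar>)"

(* k-th binary digit (k = 1..K, most significant first) of b in {0..2^K-1} *)
definition bdigit :: "nat \<Rightarrow> nat \<Rightarrow> nat \<Rightarrow> nat" where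
  "bdigit K b k = (b div 2 ^ (K - k)) mod 2"

definition null_configs :: "nat \<Rightarrow> (nat \<Rightarrow> int) set" where
  "null_configs K = {h \<in> configs K. (\<Sum>k=1..K. \<bar>h k\<bar>) < int K}"

(* csmGmm parameter constraints: M b components for binary class b,
   mean magnitudes mu b m k, mixing probabilities p b m *)
definition csmGmm :: "nat \<Rightarrow> (nat \<Rightarrow> nat) \<Rightarrow> (nat \<Rightarrow> nat \<Rightarrow> nat \<Rightarrow> real)
                      \<Rightarrow> (nat \<Rightarrow> nat \<Rightarrow> real) \<Rightarrow> bool" where
  "csmGmm K M mu p \<longleftrightarrow>
     (\<forall>b < 2 ^ K. M b \<ge> 1) \<and> M 0 = 1 \<and>
     (\<forall>b < 2 ^ K. \<forall>m\<in>{1..M b}. \<forall>k\<in>{1..K}.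
         (bdigit K b k = 0 \<longrightarrow> mu b m k = 0) \<and> (bdigit K b k = 1 \<longrightarrow> mu b m k > 0)) \<and>
     (\<forall>b < 2 ^ K - 1. \<forall>m\<in>{1..M (2 ^ K - 1)}. \<forall>m'\<in>{1..M b}. \<forall>k\<in>{1..K}.
         mu (2 ^ K - 1) m k \<ge> mu b m' k) \<and>
     (\<forall>b < 2 ^ K. \<forall>m\<in>{1..M b}. p b m \<ge> 0) \<and>
     (\<Sum>h\<in>configs K. \<Sum>m=1..M (binrep K h). p (binrep K h) m) = 1"

definition config_dens :: "nat \<Rightarrow> (nat \<Rightarrow> nat) \<Rightarrow> (nat \<Rightarrow> nat \<Rightarrow> nat \<Rightarrow> real)
                      \<Rightarrow> (nat \<Rightarrow> nat \<Rightarrow> real) \<Rightarrow> (nat \<Rightarrow> int) \<Rightarrow> (nat \<Rightarrow> real) \<Rightarrow> real" where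
  "config_dens K M mu p h z =
     (\<Sum>m=1..M (binrep K h). p (binrep K h) m *
        (\<Prod>k=1..K. std_normal_density (z k - real_of_int (h k) * mu (binrep K h) m k)))"

definition lfdr :: "nat \<Rightarrow> (nat \<Rightarrow> nat) \<Rightarrow> (nat \<Rightarrow> nat \<Rightarrow> nat \<Rightarrow> real)
                      \<Rightarrow> (nat \<Rightarrow> nat \<Rightarrow> real) \<Rightarrow> (nat \<Rightarrow> real) \<Rightarrow> real" where
  "lfdr K M mu p z =
     (\<Sum>h\<in>null_configs K. config_dens K M mu p h z) / (\<Sum>h\<in>configs K. config_dens K M mu p h z)"

end

theory Submission
  imports Defs
begin


lemma cosh_mono_abs: "\<bar>x\<bar> \<le> \<bar>y\<bar> \<Longrightarrow> cosh x \<le> cosh (y::real)"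
proof -
  assume a: "\<bar>x\<bar> \<le> \<bar>y\<bar>"
  have "cosh x = cosh \<bar>x\<bar>" "cosh y = cosh \<bar>y\<bar>" by (auto simp: abs_if)
  then show ?thesis using a cosh_real_nonneg_le_iff[of "\<bar>x\<bar>" "\<bar>y\<bar>"] by simp
qed

lemma cosh_key:
  fixes s t a b :: real
  assumes "\<bar>s\<bar> \<le> \<bar>t\<bar>" "\<bar>a\<bar> \<le> \<bar>b\<bar>"
  shows "cosh (t*a) * cosh (s*b) \<le> cosh (s*a) * cosh (t*b)"
proof -
  define S T n m where "S = \<bar>s\<bar>" "T = \<bar>t\<bar>" "n = \<bar>a\<bar>" "m = \<bar>b\<bar>"
  have c: "cosh (x*y) = cosh (\<bar>x\<bar>*\<bar>y\<bar>)" for x y :: real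
    by (metis abs_mult cosh_real_eq_iff abs_abs)
  have nn: "0 \<le> S" "0 \<le> n" "S \<le> T" "n \<le> m" using assms by (auto simp: S_T_n_m_def)
  have p1: "(m-n)*(T-S) \<ge> 0" "(m-n)*(T+S) \<ge> 0" "(T-S)*(m+n) \<ge> 0" "S*n \<le> T*m"
    using nn by (auto intro!: mult_nonneg_nonneg mult_mono)
  have e1: "\<bar>T*n+S*m\<bar> \<le> \<bar>S*n+T*m\<bar>" using p1 nn by (simp add: algebra_simps)
  have e2: "\<bar>T*n-S*m\<bar> \<le> \<bar>S*n-T*m\<bar>" using p1 nn by (simp add: algebra_simps abs_le_iff abs_if)
  have "2 * (cosh (T*n) * cosh (S*m)) = cosh (T*n+S*m) + cosh (T*n-S*m)"
    by (simp add: cosh_add cosh_diff)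
  also have "\<dots> \<le> cosh (S*n+T*m) + cosh (S*n-T*m)"
    using cosh_mono_abs[OF e1] cosh_mono_abs[OF e2] by simp
  also have "\<dots> = 2 * (cosh (S*n) * cosh (T*m))"
    by (simp add: cosh_add cosh_diff)
  finally show ?thesis unfolding c[of t a] c[of s b] c[of s a] c[of t b] S_T_n_m_def by simp
qed

definition Gf :: "real \<Rightarrow> real \<Rightarrow> real" where
  "Gf x t = std_normal_density (t - x) + std_normal_density (t + x)"

lemma Gf_eq: "Gf x t = 2 / sqrt (2*pi) * exp (-(t^2+x^2)/2) * cosh (t* x)"
proof -
  have a: "exp (- ((t - x)^2) / 2) = exp (-(t^2+x^2)/2) * exp (t* x)"
    by (simp add: exp_add[symmetric] power2_eq_square algebra_simps add_divide_distrib diff_divide_distrib)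
  have b: "exp (- ((t + x)^2) / 2) = exp (-(t^2+x^2)/2) * exp (-(t* x))"
    by (simp add: exp_add[symmetric] power2_eq_square algebra_simps add_divide_distrib diff_divide_distrib)
  show ?thesis unfolding Gf_def std_normal_density_def a b cosh_def
    by (simp add: algebra_simps add_divide_distrib)
qed

lemma G_key:
  assumes "\<bar>s\<bar> \<le> \<bar>t\<bar>" "\<bar>a\<bar> \<le> \<bar>b\<bar>"
  shows "Gf a t * Gf b s \<le> Gf a s * Gf b t"
proof -
  define c where "c = 2 / sqrt (2*pi)"
  define E where "E = exp (-(t^2+a^2)/2) * exp (-(s^2+b^2)/2)"
  have E2: "E = exp (-(s^2+a^2)/2) * exp (-(t^2+b^2)/2)"
    unfolding E_def exp_add[symmetric] by (rule arg_cong[where f=exp]) (simp add: field_simps)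
  have "Gf a t * Gf b s = (c*c*E) * (cosh (t*a) * cosh (s*b))"
    unfolding Gf_eq c_def E_def by (simp add: algebra_simps)
  also have "\<dots> \<le> (c*c*E) * (cosh (s*a) * cosh (t*b))"
    by (rule mult_left_mono[OF cosh_key[OF assms]]) (simp add: E_def c_def)
  also have "\<dots> = Gf a s * Gf b t"
    unfolding Gf_eq c_def E2 by (simp add: algebra_simps)
  finally show ?thesis .
qed



definition Qf :: "nat \<Rightarrow> (nat \<Rightarrow> nat \<Rightarrow> nat \<Rightarrow> real) \<Rightarrow> (nat \<Rightarrow> nat \<Rightarrow> real) \<Rightarrow> nat
   \<Rightarrow> (nat \<Rightarrow> real) \<Rightarrow> (nat \<Rightarrow> int) \<Rightarrow> nat \<Rightarrow> real" where
  "Qf K mu p k z h m = p (binrep K h) m *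
     (\<Prod>j\<in>{1..K}-{k}. std_normal_density (z j - real_of_int (h j) * mu (binrep K h) m j))"

definition fl :: "nat \<Rightarrow> (nat \<Rightarrow> int) \<Rightarrow> (nat \<Rightarrow> int)" where
  "fl k h = h(k := - h k)"

lemma dens_split:
  assumes "k \<in> {1..K}"
  shows "config_dens K M mu p h (z(k:=t)) = (\<Sum>m=1..M (binrep K h). Qf K mu p k z h m *
      std_normal_density (t - real_of_int (h k) * mu (binrep K h) m k))"
  unfolding config_dens_def Qf_def
proof (rule sum.cong[OF refl])
  fix m
  have "(\<Prod>j=1..K. std_normal_density ((z(k:=t)) j - real_of_int (h j) * mu (binrep K h) m j))
    = std_normal_density (t - real_of_int (h k) * mu (binrep K h) m k) *
      (\<Prod>j\<in>{1..K}-{k}. std_normal_density ((z(k:=t)) j - real_of_int (h j) * mu (binrep K h) m j))"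
    using assms by (subst prod.remove[of _ k]) auto
  also have "(\<Prod>j\<in>{1..K}-{k}. std_normal_density ((z(k:=t)) j - real_of_int (h j) * mu (binrep K h) m j))
     = (\<Prod>j\<in>{1..K}-{k}. std_normal_density (z j - real_of_int (h j) * mu (binrep K h) m j))"
    by (rule prod.cong) auto
  finally show "p (binrep K h) m *
         (\<Prod>j = 1..K. std_normal_density ((z(k := t)) j - real_of_int (h j) * mu (binrep K h) m j)) =
         p (binrep K h) m *
         (\<Prod>j\<in>{1..K} - {k}. std_normal_density (z j - real_of_int (h j) * mu (binrep K h) m j)) *
         std_normal_density (t - real_of_int (h k) * mu (binrep K h) m k)"
    by simp
qed

lemma binrep_fl: "binrep K (fl k h) = binrep K h"
  unfolding binrep_def fl_def by (rule sum.cong) auto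

lemma Qf_fl: "Qf K mu p k z (fl k h) m = Qf K mu p k z h m"
  unfolding Qf_def binrep_fl by (auto intro!: prod.cong simp: fl_def)

lemma fl_fl: "fl k (fl k h) = h"
  unfolding fl_def by auto

lemma fl_configs: "h \<in> configs K \<Longrightarrow> fl k h \<in> configs K"
  unfolding configs_def fl_def by auto

lemma fl_null: "h \<in> null_configs K \<Longrightarrow> fl k h \<in> null_configs K"
proof -
  assume a: "h \<in> null_configs K"
  have "(\<Sum>j=1..K. \<bar>fl k h j\<bar>) = (\<Sum>j=1..K. \<bar>h j\<bar>)"
    by (rule sum.cong) (auto simp: fl_def)
  then show ?thesis using a fl_configs unfolding null_configs_def by auto
qed

lemma sym_sum:
  assumes k: "k \<in> {1..K}" and S: "\<And>h. h \<in> S \<Longrightarrow> fl k h \<in> S"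
  shows "2 * (\<Sum>h\<in>S. config_dens K M mu p h (z(k:=t))) =
    (\<Sum>h\<in>S. \<Sum>m=1..M (binrep K h). Qf K mu p k z h m *
        Gf (real_of_int (h k) * mu (binrep K h) m k) t)"
proof -
  have r: "(\<Sum>h\<in>S. config_dens K M mu p h (z(k:=t))) = (\<Sum>h\<in>S. config_dens K M mu p (fl k h) (z(k:=t)))"
    by (rule sum.reindex_bij_witness[where i="fl k" and j="fl k"]) (auto simp: fl_fl S)
  have f: "config_dens K M mu p (fl k h) (z(k:=t)) = (\<Sum>m=1..M (binrep K h). Qf K mu p k z h m *
      std_normal_density (t + real_of_int (h k) * mu (binrep K h) m k))" for h
    unfolding dens_split[OF k] binrep_fl Qf_fl by (simp add: fl_def)
  have "2 * (\<Sum>h\<in>S. config_dens K M mu p h (z(k:=t))) =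
     (\<Sum>h\<in>S. config_dens K M mu p h (z(k:=t))) + (\<Sum>h\<in>S. config_dens K M mu p (fl k h) (z(k:=t)))"
    using r by simp
  also have "\<dots> = (\<Sum>h\<in>S. \<Sum>m=1..M (binrep K h). Qf K mu p k z h m *
        Gf (real_of_int (h k) * mu (binrep K h) m k) t)"
    unfolding f unfolding dens_split[OF k] Gf_def
    by (simp add: sum.distrib[symmetric] algebra_simps)
  finally show ?thesis .
qed

lemma finite_configs: "finite (configs K)"
proof -
  have "configs K \<subseteq> (\<lambda>f k. if k \<in> {1..K} then f k else 0) ` (Pi\<^sub>E {1..K} (\<lambda>_. {-1,0,1::int}))"
  proof
    fix h assume h: "h \<in> configs K"
    show "h \<in> (\<lambda>f k. if k \<in> {1..K} then f k else 0) ` (Pi\<^sub>E {1..K} (\<lambda>_. {-1,0,1::int}))"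
    proof
      show "h = (\<lambda>k. if k \<in> {1..K} then restrict h {1..K} k else 0)"
        using h unfolding configs_def by (auto simp: fun_eq_iff)
      show "restrict h {1..K} \<in> Pi\<^sub>E {1..K} (\<lambda>_. {-1,0,1::int})"
        using h unfolding configs_def by auto
    qed
  qed
  moreover have "finite (Pi\<^sub>E {1..K} (\<lambda>_. {-1,0,1::int}))" by (rule finite_PiE) auto
  ultimately show ?thesis by (rule finite_subset[OF _ finite_imageI])
qed

lemma null_sub: "null_configs K \<subseteq> configs K"
  unfolding null_configs_def by auto

lemma sum_pow: "(\<Sum>k=1..K. (2::nat) ^ (K - k)) = 2 ^ K - 1"
proof -
  have "(\<Sum>k=1..K. (2::nat) ^ (K - k)) = (\<Sum>i=0..<K. 2 ^ i)"
    by (rule sum.reindex_bij_witness[where i="\<lambda>i. K - i" and j="\<lambda>k. K - k"]) auto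
  also have "\<dots> = 2 ^ K - 1" by (induction K) auto
  finally show ?thesis .
qed

lemma abs_le1: "h \<in> configs K \<Longrightarrow> k \<in> {1..K} \<Longrightarrow> \<bar>h k\<bar> \<le> 1"
proof -
  assume "h \<in> configs K" "k \<in> {1..K}"
  then have "h k \<in> {-1,0,1}" unfolding configs_def by blast
  then show ?thesis by auto
qed

lemma binrep_le_terms: "h \<in> configs K \<Longrightarrow> k \<in> {1..K} \<Longrightarrow> nat \<bar>h k\<bar> \<le> 1"
  using abs_le1 by fastforce

lemma binrep_lt: "h \<in> configs K \<Longrightarrow> binrep K h < 2 ^ K"
proof -
  assume h: "h \<in> configs K"
  have "binrep K h \<le> (\<Sum>k=1..K. (2::nat) ^ (K - k))"
    unfolding binrep_def by (rule sum_mono) (use binrep_le_terms[OF h] in auto)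
  then show ?thesis using sum_pow[of K] by (metis le_imp_less_Suc less_imp_diff_less Suc_diff_1 zero_less_numeral zero_less_power diff_le_self order_le_less_trans le_less_trans less_le_trans)
qed



lemma null_zero:
  assumes h: "h \<in> null_configs K" shows "\<exists>j\<in>{1..K}. h j = 0"
proof (rule ccontr)
  assume a: "\<not> ?thesis"
  have hc: "h \<in> configs K" using h null_sub by blast
  have "\<bar>h j\<bar> = 1" if j: "j \<in> {1..K}" for j
  proof -
    have "\<bar>h j\<bar> \<le> 1" by (rule abs_le1[OF hc j])
    moreover have "h j \<noteq> 0" using a j by blast
    ultimately show ?thesis by linarith
  qed
  then have "(\<Sum>j=1..K. \<bar>h j\<bar>) = (\<Sum>j=1..K. 1)" by (intro sum.cong) auto
  then have "(\<Sum>j=1..K. \<bar>h j\<bar>) = int K" by simp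
  then show False using h unfolding null_configs_def by simp
qed

lemma alt_one:
  assumes h: "h \<in> configs K - null_configs K" and k: "k \<in> {1..K}"
  shows "\<bar>h k\<bar> = 1"
proof (rule ccontr)
  assume a: "\<bar>h k\<bar> \<noteq> 1"
  have hc: "h \<in> configs K" using h by blast
  have le: "\<forall>j\<in>{1..K}. \<bar>h j\<bar> \<le> 1" using abs_le1[OF hc] by blast
  have lt: "\<exists>j\<in>{1..K}. \<bar>h j\<bar> < 1" using abs_le1[OF hc k] a k by force
  have "(\<Sum>j=1..K. \<bar>h j\<bar>) < (\<Sum>j=1..K. 1)"
    by (rule sum_strict_mono_ex1[OF _ le lt]) simp
  then have "(\<Sum>j=1..K. \<bar>h j\<bar>) < int K" by simp
  then have "h \<in> null_configs K" using hc unfolding null_configs_def by simp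
  then show False using h by simp
qed

lemma binrep_alt:
  assumes h: "h \<in> configs K - null_configs K" shows "binrep K h = 2 ^ K - 1"
proof -
  have "binrep K h = (\<Sum>k=1..K. (2::nat) ^ (K - k))"
    unfolding binrep_def by (rule sum.cong) (use alt_one[OF h] in auto)
  then show ?thesis using sum_pow by simp
qed

lemma binrep_null:
  assumes h: "h \<in> null_configs K" shows "binrep K h < 2 ^ K - 1"
proof -
  obtain j where j: "j \<in> {1..K}" "h j = 0" using null_zero[OF h] by blast
  have hc: "h \<in> configs K" using h null_sub by blast
  have "binrep K h = (\<Sum>k\<in>{1..K}-{j}. 2 ^ (K - k) * nat \<bar>h k\<bar>)"
    unfolding binrep_def using j by (subst sum.remove[of _ j]) auto
  also have "\<dots> \<le> (\<Sum>k\<in>{1..K}-{j}. 2 ^ (K - k))"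
    by (rule sum_mono) (use binrep_le_terms[OF hc] in auto)
  finally have a: "binrep K h \<le> (\<Sum>k\<in>{1..K}-{j}. (2::nat) ^ (K - k))" .
  have "(\<Sum>k=1..K. (2::nat) ^ (K - k)) = 2 ^ (K - j) + (\<Sum>k\<in>{1..K}-{j}. 2 ^ (K - k))"
    using j by (subst sum.remove[of _ j]) auto
  then have "binrep K h + 2 ^ (K - j) \<le> 2 ^ K - 1" using a sum_pow[of K] by simp
  moreover have "(1::nat) \<le> 2 ^ (K - j)" by simp
  ultimately show ?thesis by linarith
qed
lemma csm_mu:
  assumes "csmGmm K M mu p"
  shows "\<forall>b < 2 ^ K. \<forall>m\<in>{1..M b}. \<forall>k\<in>{1..K}.
         (bdigit K b k = 0 \<longrightarrow> mu b m k = 0) \<and> (bdigit K b k = 1 \<longrightarrow> mu b m k > 0)"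
  using assms unfolding csmGmm_def by (elim conjE)

lemma csm_ord:
  assumes "csmGmm K M mu p"
  shows "\<forall>b < 2 ^ K - 1. \<forall>m\<in>{1..M (2 ^ K - 1)}. \<forall>m'\<in>{1..M b}. \<forall>k\<in>{1..K}.
         mu (2 ^ K - 1) m k \<ge> mu b m' k"
  using assms unfolding csmGmm_def by (elim conjE)

lemma csm_p:
  assumes "csmGmm K M mu p"
  shows "\<forall>b < 2 ^ K. \<forall>m\<in>{1..M b}. p b m \<ge> 0"
  using assms unfolding csmGmm_def by (elim conjE)

lemma csm_sum:
  assumes "csmGmm K M mu p"
  shows "(\<Sum>h\<in>configs K. \<Sum>m=1..M (binrep K h). p (binrep K h) m) = 1"
  using assms unfolding csmGmm_def by (elim conjE)

lemma mu_nonneg: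
  assumes g: "csmGmm K M mu p" and b: "b < 2 ^ K" and m: "m \<in> {1..M b}" and k: "k \<in> {1..K}"
  shows "0 \<le> mu b m k"
proof -
  have d: "bdigit K b k = 0 \<or> bdigit K b k = 1" unfolding bdigit_def by auto
  have "(bdigit K b k = 0 \<longrightarrow> mu b m k = 0) \<and> (bdigit K b k = 1 \<longrightarrow> mu b m k > 0)"
    using csm_mu[OF g] b m k by blast
  then show ?thesis using d by auto
qed

lemma p_nonneg:
  assumes g: "csmGmm K M mu p" and b: "b < 2 ^ K" and m: "m \<in> {1..M b}"
  shows "0 \<le> p b m"
  using csm_p[OF g] b m by blast

lemma std_pos: "0 < std_normal_density x"
  unfolding std_normal_density_def by simp

lemma Qf_nonneg:
  assumes g: "csmGmm K M mu p" and h: "h \<in> configs K" and m: "m \<in> {1..M (binrep K h)}"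
  shows "0 \<le> Qf K mu p k z h m"
  unfolding Qf_def using p_nonneg[OF g binrep_lt[OF h] m]
  by (intro mult_nonneg_nonneg prod_nonneg) (auto intro: less_imp_le std_pos)

lemma total_pos:
  assumes g: "csmGmm K M mu p"
  shows "0 < (\<Sum>h\<in>configs K. config_dens K M mu p h w)"
proof -
  have s1: "(\<Sum>h\<in>configs K. \<Sum>m=1..M (binrep K h). p (binrep K h) m) = 1"
    by (rule csm_sum[OF g])
  have "\<exists>h\<in>configs K. \<exists>m\<in>{1..M (binrep K h)}. p (binrep K h) m \<noteq> 0"
  proof (rule ccontr)
    assume "\<not> ?thesis"
    then have "(\<Sum>h\<in>configs K. \<Sum>m=1..M (binrep K h). p (binrep K h) m) = 0" by simp
    then show False using s1 by simp
  qed
  then obtain h m where hm: "h \<in> configs K" "m \<in> {1..M (binrep K h)}" "p (binrep K h) m \<noteq> 0" by blast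
  have pp: "0 < p (binrep K h) m" using hm p_nonneg[OF g binrep_lt[OF hm(1)] hm(2)] by simp
  have term_nn: "0 \<le> p (binrep K h') m' * (\<Prod>k=1..K. std_normal_density (w k - real_of_int (h' k) * mu (binrep K h') m' k))"
    if "h' \<in> configs K" "m' \<in> {1..M (binrep K h')}" for h' m'
    using p_nonneg[OF g binrep_lt[OF that(1)] that(2)]
    by (intro mult_nonneg_nonneg prod_nonneg) (auto intro: less_imp_le std_pos)
  have "0 < config_dens K M mu p h w"
    unfolding config_dens_def
  proof (rule sum_pos2[OF _ hm(2)])
    show "0 < p (binrep K h) m * (\<Prod>k=1..K. std_normal_density (w k - real_of_int (h k) * mu (binrep K h) m k))"
      using pp by (intro mult_pos_pos prod_pos std_pos) auto
    fix i assume "i \<in> {1..M (binrep K h)}"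
    then show "0 \<le> p (binrep K h) i * (\<Prod>k=1..K. std_normal_density (w k - real_of_int (h k) * mu (binrep K h) i k))"
      using term_nn[OF hm(1)] by blast
  qed simp
  moreover have "0 \<le> config_dens K M mu p h' w" if "h' \<in> configs K" for h'
    unfolding config_dens_def
  proof (rule sum_nonneg)
    fix x assume "x \<in> {1..M (binrep K h')}"
    then show "0 \<le> p (binrep K h') x * (\<Prod>k=1..K. std_normal_density (w k - real_of_int (h' k) * mu (binrep K h') x k))"
      by (rule term_nn[OF that])
  qed
  ultimately show ?thesis by (intro sum_pos2[OF finite_configs hm(1)])
qed



lemma mono_main:
  assumes g: "csmGmm K M mu p" and k: "k \<in> {1..K}" and st: "\<bar>s\<bar> \<le> \<bar>t\<bar>"
  shows "lfdr K M mu p (z(k:=t)) \<le> lfdr K M mu p (z(k:=s))"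
proof -
  define X where "X = (\<lambda>S u. (\<Sum>h\<in>S. \<Sum>m=1..M (binrep K h). Qf K mu p k z h m *
        Gf (real_of_int (h k) * mu (binrep K h) m k) u))"
  define NN where "NN = X (null_configs K)"
  define AA where "AA = X (configs K - null_configs K)"
  define TT where "TT = X (configs K)"
  have N2: "2 * (\<Sum>h\<in>null_configs K. config_dens K M mu p h (z(k:=u))) = NN u" for u
    unfolding NN_def X_def by (rule sym_sum[OF k fl_null])
  have T2: "2 * (\<Sum>h\<in>configs K. config_dens K M mu p h (z(k:=u))) = TT u" for u
    unfolding TT_def X_def by (rule sym_sum[OF k fl_configs])
  have TNA: "TT u = NN u + AA u" for u
    unfolding TT_def NN_def AA_def X_def
    by (subst sum.subset_diff[OF null_sub finite_configs]) (simp add: add.commute)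
  have pos: "0 < TT u" for u using total_pos[OF g, of "z(k:=u)"] T2[of u] by linarith
  have lf: "lfdr K M mu p (z(k:=u)) = NN u / TT u" for u
    unfolding lfdr_def N2[symmetric] T2[symmetric] by simp
  have key: "NN t * AA s \<le> NN s * AA t"
    unfolding NN_def AA_def X_def sum_distrib_left sum_distrib_right
  proof (intro sum_mono)
    fix h m h' m'
    assume h: "h \<in> null_configs K" and m: "m \<in> {1..M (binrep K h)}"
      and h': "h' \<in> configs K - null_configs K" and m': "m' \<in> {1..M (binrep K h')}"
    have hc: "h \<in> configs K" using h null_sub by blast
    have bh: "binrep K h < 2 ^ K - 1" by (rule binrep_null[OF h])
    have bh': "binrep K h' = 2 ^ K - 1" by (rule binrep_alt[OF h'])
    have q1: "0 \<le> Qf K mu p k z h m" by (rule Qf_nonneg[OF g hc m])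
    have q2: "0 \<le> Qf K mu p k z h' m'" using h' m' by (intro Qf_nonneg[OF g]) auto
    have mu0: "0 \<le> mu (binrep K h) m k" using mu_nonneg[OF g _ m k] bh by simp
    have mule: "mu (binrep K h) m k \<le> mu (2 ^ K - 1) m' k"
      using csm_ord[OF g] bh m m' k unfolding bh' by blast
    have a1: "\<bar>h k\<bar> \<le> 1" by (rule abs_le1[OF hc k])
    have a2: "\<bar>h' k\<bar> = 1" by (rule alt_one[OF h' k])
    have "\<bar>real_of_int (h k) * mu (binrep K h) m k\<bar> \<le> mu (binrep K h) m k"
      using a1 mu0 by (simp add: abs_mult mult_left_le_one_le)
    also have "\<dots> \<le> \<bar>real_of_int (h' k) * mu (binrep K h') m' k\<bar>"
      using a2 mule mu0 bh' by (simp add: abs_mult flip: of_int_abs)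
    finally have ab: "\<bar>real_of_int (h k) * mu (binrep K h) m k\<bar> \<le> \<bar>real_of_int (h' k) * mu (binrep K h') m' k\<bar>" .
    note GK = G_key[OF st ab]
    show "Qf K mu p k z h m * Gf (real_of_int (h k) * mu (binrep K h) m k) t *
          (Qf K mu p k z h' m' * Gf (real_of_int (h' k) * mu (binrep K h') m' k) s)
        \<le> Qf K mu p k z h m * Gf (real_of_int (h k) * mu (binrep K h) m k) s *
          (Qf K mu p k z h' m' * Gf (real_of_int (h' k) * mu (binrep K h') m' k) t)"
      using mult_left_mono[OF GK mult_nonneg_nonneg[OF q1 q2]] by (simp add: algebra_simps)
  qed
  have "NN t * TT s \<le> NN s * TT t" unfolding TNA using key by (simp add: algebra_simps)
  then show ?thesis unfolding lf using pos[of t] pos[of s] by (simp add: divide_simps)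
qed

lemma lfdr_cong:
  assumes "\<forall>k\<in>{1..K}. z k = z' k"
  shows "lfdr K M mu p z = lfdr K M mu p z'"
proof -
  have "config_dens K M mu p h z = config_dens K M mu p h z'" for h
    unfolding config_dens_def
    by (intro sum.cong refl arg_cong2[where f="(*)"] prod.cong) (auto simp: assms)
  then show ?thesis unfolding lfdr_def by simp
qed

theorem theorem1:
  fixes K :: nat and M :: "nat \<Rightarrow> nat" and mu :: "nat \<Rightarrow> nat \<Rightarrow> nat \<Rightarrow> real"
    and p :: "nat \<Rightarrow> nat \<Rightarrow> real"
  assumes "K \<ge> 2"
    and "csmGmm K M mu p"
  shows "(\<forall>k\<in>{1..K}. \<forall>z :: nat \<Rightarrow> real. \<forall>s t :: real. 0 < s \<longrightarrow> s \<le> t \<longrightarrow>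
            lfdr K M mu p (z(k := t)) \<le> lfdr K M mu p (z(k := s)))
       \<and> (\<forall>k\<in>{1..K}. \<forall>z :: nat \<Rightarrow> real. \<forall>s t :: real. s \<le> t \<longrightarrow> t < 0 \<longrightarrow>
            lfdr K M mu p (z(k := s)) \<le> lfdr K M mu p (z(k := t)))
       \<and> (\<forall>z z' :: nat \<Rightarrow> real.
            (\<forall>k\<in>{1..K}. sgn (z k) = sgn (z' k) \<and> \<bar>z k\<bar> \<ge> \<bar>z' k\<bar>) \<longrightarrow>
            lfdr K M mu p z \<le> lfdr K M mu p z')"
proof (intro conjI ballI allI impI)
  fix k z s t assume "k \<in> {1..K}" "0 < (s::real)" "s \<le> t"
  then show "lfdr K M mu p (z(k := t)) \<le> lfdr K M mu p (z(k := s))"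
    by (intro mono_main[OF assms(2)]) auto
next
  fix k z s t assume "k \<in> {1..K}" "(s::real) \<le> t" "t < 0"
  then show "lfdr K M mu p (z(k := s)) \<le> lfdr K M mu p (z(k := t))"
    by (intro mono_main[OF assms(2)]) auto
next
  fix z z' :: "nat \<Rightarrow> real"
  assume zz: "\<forall>k\<in>{1..K}. sgn (z k) = sgn (z' k) \<and> \<bar>z k\<bar> \<ge> \<bar>z' k\<bar>"
  define u where "u = (\<lambda>n i. if 1 \<le> i \<and> i \<le> n then z i else z' i)"
  have step: "lfdr K M mu p (u (Suc n)) \<le> lfdr K M mu p (u n)" if n: "n < K" for n
  proof -
    have e1: "u (Suc n) = (u n)(Suc n := z (Suc n))" unfolding u_def by (auto simp: fun_eq_iff)
    have e2: "u n = (u n)(Suc n := z' (Suc n))" unfolding u_def by (auto simp: fun_eq_iff)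
    have "lfdr K M mu p ((u n)(Suc n := z (Suc n))) \<le> lfdr K M mu p ((u n)(Suc n := z' (Suc n)))"
      by (rule mono_main[OF assms(2)]) (use zz n in auto)
    then show ?thesis using e1 e2 by simp
  qed
  have chain: "n \<le> K \<Longrightarrow> lfdr K M mu p (u n) \<le> lfdr K M mu p (u 0)" for n
  proof (induction n)
    case 0 then show ?case by simp
  next
    case (Suc n) then show ?case using step[of n] by simp
  qed
  have "lfdr K M mu p z = lfdr K M mu p (u K)" by (rule lfdr_cong) (auto simp: u_def)
  also have "\<dots> \<le> lfdr K M mu p (u 0)" by (rule chain) simp
  also have "\<dots> = lfdr K M mu p z'" by (rule lfdr_cong) (auto simp: u_def)
  finally show "lfdr K M mu p z \<le> lfdr K M mu p z'" .
qed


end
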